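(* Equip $\mathbb{R}^{1,1}$ with the Minkowski inner product $x\cdot y=-x_0y_0+x_1y_1$. Let $\theta_0,\theta_1,\theta_2\in\mathbb{R}$ with $\theta_0\neq\theta_1$ and $\theta_0\neq\theta_2$, and let $P_i=(\sinh\theta_i,\cosh\theta_i)$ for $i=0,1,2$; these are points on the branch $x_1>0$ of the hyperbola $-x_0^2+x_1^2=1$. Then the chords $P_0P_1$ and $P_0P_2$ are timelike, and the pseudo-angle $\theta$ between them satisfies $$\cosh^2(\theta)=\cosh^2\left(\frac{\theta_1-\theta_2}{2}\right).$$ In particular, $\theta$ does not depend on the position of $P_0$ (i.e. on $\theta_0$).
   Context: A vector $x\in\mathbb{R}^{1,1}$ is timelike if $x\cdot x<0$ and spacelike if $x\cdot x>0$. For two vectors $x,y$ that are both timelike or both spacelike, one has $(x\cdot y)^2\ge (x\cdot x)(y\cdot y)$, and the pseudo-angle $\theta\ge 0$ between them is defined by $\cosh^2(\theta)=\frac{(x\cdot y)^2}{(x\cdot x)(y\cdot y)}$. The pseudo-angle between two chords (line segments) is the pseudo-angle between their direction vectors. *)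

theory Defs
  imports Complex_Main
begin

definition mink :: "real \<times> real \<Rightarrow> real \<times> real \<Rightarrow> real" where
  "mink x y = - fst x * fst y + snd x * snd y"

definition timelike :: "real \<times> real \<Rightarrow> bool" where
  "timelike x \<longleftrightarrow> mink x x < 0"

definition spacelike :: "real \<times> real \<Rightarrow> bool" where
  "spacelike x \<longleftrightarrow> mink x x > 0"

definition pseudo_angle :: "real \<times> real \<Rightarrow> real \<times> real \<Rightarrow> real" where
  "pseudo_angle x y = (THE t. t \<ge> 0 \<and> cosh t ^ 2 = (mink x y)^2 / (mink x x * mink y y))"

definition chord :: "real \<times> real \<Rightarrow> real \<times> real \<Rightarrow> real \<times> real" where
  "chord P Q = (fst Q - fst P, snd Q - snd P)"

definition hyp_pt :: "real \<Rightarrow> real \<times> real" where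
  "hyp_pt t = (sinh t, cosh t)"

end

theory Submission imports Defs begin
lemma key: fixes x y z :: real
  shows "mink (chord (hyp_pt x) (hyp_pt y)) (chord (hyp_pt x) (hyp_pt z)) = -4 * cosh ((y-z)/2) * sinh ((y-x)/2) * sinh ((z-x)/2)"
proof -
  define p q r where "p = exp (x/2)" and "q = exp (y/2)" and "r = exp (z/2)"
  have pos: "p > 0" "q > 0" "r > 0" unfolding p_def q_def r_def by auto
  have e: "exp x = p^2" "exp y = q^2" "exp z = r^2"
    unfolding p_def q_def r_def by (simp_all add: power2_eq_square flip: exp_add)
  have h: "exp ((y-z)/2) = q/r" "exp ((y-x)/2) = q/p" "exp ((z-x)/2) = r/p"
    unfolding p_def q_def r_def by (simp_all add: diff_divide_distrib exp_diff)
  have h2: "exp (-((y-z)/2)) = r/q" "exp (-((y-x)/2)) = p/q" "exp (-((z-x)/2)) = p/r"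
    by (simp_all add: exp_minus h)
  have e2: "exp (-x) = 1/p^2" "exp (-y) = 1/q^2" "exp (-z) = 1/r^2" by (simp_all add: exp_minus e divide_inverse)
  show ?thesis
    unfolding mink_def chord_def hyp_pt_def sinh_def cosh_def
    using pos apply (simp add: e e2 h h2 field_simps)
    by algebra
qed

theorem mainTheorem1:
  fixes t0 t1 t2 :: real
  assumes "t0 \<noteq> t1" and "t0 \<noteq> t2"
  shows "timelike (chord (hyp_pt t0) (hyp_pt t1))
       \<and> timelike (chord (hyp_pt t0) (hyp_pt t2))
       \<and> cosh (pseudo_angle (chord (hyp_pt t0) (hyp_pt t1)) (chord (hyp_pt t0) (hyp_pt t2))) ^ 2
           = cosh ((t1 - t2) / 2) ^ 2"
proof -
  define u where "u = chord (hyp_pt t0) (hyp_pt t1)"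
  define v where "v = chord (hyp_pt t0) (hyp_pt t2)"
  define a where "a = sinh ((t1-t0)/2)"
  define b where "b = sinh ((t2-t0)/2)"
  have a0: "a \<noteq> 0" using assms(1) unfolding a_def by simp
  have b0: "b \<noteq> 0" using assms(2) unfolding b_def by simp
  have uu: "mink u u = -4 * a^2" using key[of t0 t1 t1] unfolding u_def a_def by (simp add: power2_eq_square)
  have vv: "mink v v = -4 * b^2" using key[of t0 t2 t2] unfolding v_def b_def by (simp add: power2_eq_square)
  have uv: "mink u v = -4 * cosh ((t1-t2)/2) * a * b" using key[of t0 t1 t2] unfolding u_def v_def a_def b_def by simp
  have tu: "timelike u" unfolding timelike_def uu using a0 by simp
  have tv: "timelike v" unfolding timelike_def vv using b0 by simp
  define c where "c = cosh ((t1-t2)/2)"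
  have q: "(mink u v)^2 / (mink u u * mink v v) = c^2"
    unfolding uu vv uv c_def using a0 b0 by (simp add: field_simps power2_eq_square)
  have ex: "\<exists>!t. t \<ge> 0 \<and> cosh t ^ 2 = (mink u v)^2 / (mink u u * mink v v)"
  proof (rule ex1I[of _ "\<bar>(t1-t2)/2\<bar>"])
    show "\<bar>(t1-t2)/2\<bar> \<ge> 0 \<and> cosh \<bar>(t1-t2)/2\<bar> ^ 2 = (mink u v)^2 / (mink u u * mink v v)"
      unfolding q c_def by simp
  next
    fix t assume h: "t \<ge> 0 \<and> cosh t ^ 2 = (mink u v)^2 / (mink u u * mink v v)"
    then have "cosh t ^ 2 = c ^ 2" using q by simp
    then have "cosh t = c" unfolding c_def
      by (metis cosh_real_nonneg power2_eq_iff_nonneg)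
    then show "t = \<bar>(t1-t2)/2\<bar>" using h unfolding c_def by simp
  qed
  have "cosh (pseudo_angle u v) ^ 2 = (mink u v)^2 / (mink u u * mink v v)"
    unfolding pseudo_angle_def using theI'[OF ex] by blast
  then show ?thesis using tu tv q unfolding u_def v_def c_def by simp
qed

end
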